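(* Let $n,c\ge 1$ and let $\mathcal A$ be a deterministic automaton over $\Sigma_n^c$ whose acceptance of a run depends only on the set of transitions occurring infinitely often (e.g. a deterministic Rabin, Streett or parity automaton), and assume $\mathcal A$ recognises $L(\mathcal P_n^c)$ or its complement. If words $u,v\in(\Sigma_n^c)^*$ both lead from the initial state $s_0$ of $\mathcal A$ to the same state $s$, then $\mathrm{reach}(u)=\mathrm{reach}(v)$, or $\top\in\mathrm{reach}(u)$ and $\top\in\mathrm{reach}(v)$.
   Context: Full parity automaton $\mathcal P_n^c$: state set $Q$ with $|Q|=n$, plus a special accepting sink $\top\notin Q$ (all transitions from $\top$ lead to $\top$, and any run visiting $\top$ is accepting); $Q^\top=Q\cup\{\top\}$. Alphabet $\Sigma_n^c$ is the set of functions $\sigma:Q\times Q^\top\to 2^{\{1,\dots,c\}}$. Initial states $I=Q$; transitions $(q,\sigma,q')$ with $q\in Q$, $q'\in Q^\top$ and $\sigma(q,q')\neq\emptyset$; the priority of $(q,\sigma,q')$ with $q'\in Q$ is the largest even number in $\sigma(q,q')$ if there is one, and otherwise the smallest (odd) number in $\sigma(q,q')$. A run not visiting $\top$ is accepting iff the largest priority occurring infinitely often is even; a word is accepted iff some run accepts it. $\mathrm{reach}(u)\subseteq Q^\top$ is defined by $\mathrm{reach}(\varepsilon)=Q$ and $\mathrm{reach}(w\sigma)=\{q'\in Q^\top\mid\exists q\in\mathrm{reach}(w).\ (q,\sigma,q')\text{ is a transition}\}$ (with $\top$ always having successor $\top$). *)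

theory Defs
  imports Main
begin

text \<open>States of the full parity automaton: Q = {0..<n} (nat); Q^top is encoded as
  nat option, with Some q for q in Q and None for the accepting sink top.\<close>

type_synonym letter = "nat \<Rightarrow> nat option \<Rightarrow> nat set"

definition Qtop :: "nat \<Rightarrow> nat option set" where
  "Qtop n = insert None (Some ` {..<n})"

definition Sigma :: "nat \<Rightarrow> nat \<Rightarrow> letter set" where
  "Sigma n c = {\<sigma>. (\<forall>q q'. \<sigma> q q' \<subseteq> {1..c}) \<and>
                    (\<forall>q q'. \<not> (q < n \<and> q' \<in> Qtop n) \<longrightarrow> \<sigma> q q' = {})}"

definition ptrans :: "nat \<Rightarrow> nat option \<Rightarrow> letter \<Rightarrow> nat option \<Rightarrow> bool" where
  "ptrans n x \<sigma> y = (case x of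
      None \<Rightarrow> y = None
    | Some q \<Rightarrow> q < n \<and> y \<in> Qtop n \<and> \<sigma> q y \<noteq> {})"

definition prio :: "letter \<Rightarrow> nat \<Rightarrow> nat \<Rightarrow> nat" where
  "prio \<sigma> q q' = (let S = \<sigma> q (Some q') in
      if (\<exists>p\<in>S. even p) then Max {p\<in>S. even p} else Min S)"

definition is_prun :: "nat \<Rightarrow> (nat \<Rightarrow> letter) \<Rightarrow> (nat \<Rightarrow> nat option) \<Rightarrow> bool" where
  "is_prun n w r = (r 0 \<in> Some ` {..<n} \<and> (\<forall>i. ptrans n (r i) (w i) (r (Suc i))))"

definition prun_accepting :: "(nat \<Rightarrow> letter) \<Rightarrow> (nat \<Rightarrow> nat option) \<Rightarrow> bool" where
  "prun_accepting w r = ((\<exists>i. r i = None) \<or>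
     (\<exists>p. even p \<and> (\<exists>\<^sub>\<infinity>i. prio (w i) (the (r i)) (the (r (Suc i))) = p) \<and>
          (\<forall>p'>p. \<not> (\<exists>\<^sub>\<infinity>i. prio (w i) (the (r i)) (the (r (Suc i))) = p'))))"

definition omega_words :: "'a set \<Rightarrow> (nat \<Rightarrow> 'a) set" where
  "omega_words A = {w. \<forall>i. w i \<in> A}"

definition LP :: "nat \<Rightarrow> nat \<Rightarrow> (nat \<Rightarrow> letter) set" where
  "LP n c = {w \<in> omega_words (Sigma n c). \<exists>r. is_prun n w r \<and> prun_accepting w r}"

definition reach_step :: "nat \<Rightarrow> nat option set \<Rightarrow> letter \<Rightarrow> nat option set" where
  "reach_step n R \<sigma> = {y. \<exists>x\<in>R. ptrans n x \<sigma> y}"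

definition reach :: "nat \<Rightarrow> letter list \<Rightarrow> nat option set" where
  "reach n u = foldl (reach_step n) (Some ` {..<n}) u"

text \<open>Deterministic automaton (state type 's, initial state s0, transition function delta)
  whose acceptance depends only on the set of transitions occurring infinitely often,
  given by a predicate Acc on sets of transitions.\<close>
definition drun :: "('s \<Rightarrow> 'a \<Rightarrow> 's) \<Rightarrow> 's \<Rightarrow> (nat \<Rightarrow> 'a) \<Rightarrow> nat \<Rightarrow> 's" where
  "drun \<delta> s0 w i = foldl \<delta> s0 (map w [0..<i])"

definition inf_trans :: "('s \<Rightarrow> 'a \<Rightarrow> 's) \<Rightarrow> 's \<Rightarrow> (nat \<Rightarrow> 'a) \<Rightarrow> ('s \<times> 'a \<times> 's) set" where
  "inf_trans \<delta> s0 w = {t. \<exists>\<^sub>\<infinity>i. (drun \<delta> s0 w i, w i, drun \<delta> s0 w (Suc i)) = t}"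

definition dlang :: "'a set \<Rightarrow> ('s \<Rightarrow> 'a \<Rightarrow> 's) \<Rightarrow> 's \<Rightarrow> (('s \<times> 'a \<times> 's) set \<Rightarrow> bool)
    \<Rightarrow> (nat \<Rightarrow> 'a) set" where
  "dlang A \<delta> s0 Acc = {w \<in> omega_words A. Acc (inf_trans \<delta> s0 w)}"

end

theory Submission
  imports Defs
begin

lemma INFM_shift: "(\<exists>\<^sub>\<infinity>i::nat. P (i + k)) \<longleftrightarrow> (\<exists>\<^sub>\<infinity>i. P i)"
  unfolding cofinite_eq_sequentially frequently_def
  using eventually_sequentially_seg[of "\<lambda>i. \<not> P i" k] by simp

lemma reach_snoc: "reach n (xs @ [a]) = reach_step n (reach n xs) a"
  by (simp add: reach_def)

lemma reach_Qtop: "reach n u \<subseteq> Qtop n"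
proof (induction u rule: rev_induct)
  case Nil then show ?case by (auto simp: reach_def Qtop_def)
next
  case (snoc a xs) then show ?case
    by (auto simp: reach_snoc reach_step_def ptrans_def Qtop_def split: option.splits)
qed

lemma reach_sound:
  assumes "r 0 \<in> Some ` {..<n}" "\<And>i. i < length u \<Longrightarrow> ptrans n (r i) (u!i) (r (Suc i))"
  shows "r (length u) \<in> reach n u"
proof -
  have "\<forall>k\<le>length u. r k \<in> reach n (take k u)"
  proof (intro allI impI)
    fix k assume "k \<le> length u" then show "r k \<in> reach n (take k u)"
    proof (induction k)
      case 0 then show ?case using assms(1) by (simp add: reach_def)
    next
      case (Suc k)
      then have "take (Suc k) u = take k u @ [u!k]" by (simp add: take_Suc_conv_app_nth)
      then show ?case using Suc assms(2)[of k]
        by (auto simp: reach_snoc reach_step_def)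
    qed
  qed
  then show ?thesis by (metis order_refl take_all)
qed

lemma reach_complete:
  assumes "y \<in> reach n u"
  shows "\<exists>r. r 0 \<in> Some ` {..<n} \<and> (\<forall>i<length u. ptrans n (r i) (u!i) (r (Suc i))) \<and> r (length u) = y"
  using assms
proof (induction u arbitrary: y rule: rev_induct)
  case Nil then show ?case by (auto simp: reach_def)
next
  case (snoc a xs)
  then obtain x where x: "x \<in> reach n xs" "ptrans n x a y"
    by (auto simp: reach_snoc reach_step_def)
  from snoc.IH[OF x(1)] obtain r where r: "r 0 \<in> Some ` {..<n}"
    "\<forall>i<length xs. ptrans n (r i) (xs!i) (r (Suc i))" "r (length xs) = x" by blast
  define r' where "r' = r(Suc (length xs) := y)"
  have "\<forall>i<length (xs@[a]). ptrans n (r' i) ((xs@[a])!i) (r' (Suc i))"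
  proof (intro allI impI)
    fix i assume "i < length (xs@[a])"
    then have "i < length xs \<or> i = length xs" by auto
    then show "ptrans n (r' i) ((xs@[a])!i) (r' (Suc i))"
      using r x by (auto simp: r'_def nth_append)
  qed
  moreover have "r' 0 \<in> Some ` {..<n}" using r by (simp add: r'_def)
  moreover have "r' (length (xs@[a])) = y" by (simp add: r'_def)
  ultimately show ?case by blast
qed

definition sig :: "nat option \<Rightarrow> letter" where
  "sig x = (\<lambda>q' y. if Some q' = x \<and> y = None then {1} else {})"

definition ext :: "letter list \<Rightarrow> letter \<Rightarrow> nat \<Rightarrow> letter" where
  "ext u s = (\<lambda>i. if i < length u then u!i else s)"

lemma map_ext: "map (ext u s) [0..<length u + k] = u @ replicate k s"
proof (induction k)
  case 0
  have "map (ext u s) [0..<length u] = map (\<lambda>i. u!i) [0..<length u]"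
    by (rule map_cong) (auto simp: ext_def)
  also have "\<dots> = u" by (rule map_nth)
  finally show ?case by simp
next
  case (Suc k)
  have "[0..<length u + Suc k] = [0..<length u + k] @ [length u + k]" by simp
  then have "map (ext u s) [0..<length u + Suc k] = u @ replicate k s @ [s]"
    using Suc by (simp add: ext_def)
  then show ?case by (simp add: replicate_append_same)
qed

lemma drun_ext: "drun \<delta> s0 (ext u s) (length u + k) = foldl \<delta> (foldl \<delta> s0 u) (replicate k s)"
  by (simp add: drun_def map_ext)

lemma inf_trans_ext:
  assumes "foldl \<delta> s0 u = foldl \<delta> s0 v"
  shows "inf_trans \<delta> s0 (ext u s) = inf_trans \<delta> s0 (ext v s)"
proof -
  have "\<And>t. (\<exists>\<^sub>\<infinity>i. (drun \<delta> s0 (ext u s) i, ext u s i, drun \<delta> s0 (ext u s) (Suc i)) = t)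
     \<longleftrightarrow> (\<exists>\<^sub>\<infinity>i. (drun \<delta> s0 (ext v s) i, ext v s i, drun \<delta> s0 (ext v s) (Suc i)) = t)"
  proof -
    fix t
    have A: "\<And>w. (\<exists>\<^sub>\<infinity>i. (drun \<delta> s0 (ext w s) i, ext w s i, drun \<delta> s0 (ext w s) (Suc i)) = t)
      \<longleftrightarrow> (\<exists>\<^sub>\<infinity>i. (foldl \<delta> (foldl \<delta> s0 w) (replicate i s), s,
                     foldl \<delta> (foldl \<delta> s0 w) (replicate (Suc i) s)) = t)"
    proof -
      fix w
      have "(\<exists>\<^sub>\<infinity>i. (drun \<delta> s0 (ext w s) i, ext w s i, drun \<delta> s0 (ext w s) (Suc i)) = t)
        \<longleftrightarrow> (\<exists>\<^sub>\<infinity>i. (drun \<delta> s0 (ext w s) (i + length w), ext w s (i + length w),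
               drun \<delta> s0 (ext w s) (Suc (i + length w))) = t)"
        using INFM_shift[of "\<lambda>i. (drun \<delta> s0 (ext w s) i, ext w s i, drun \<delta> s0 (ext w s) (Suc i)) = t" "length w"]
        by simp
      also have "\<dots> \<longleftrightarrow> (\<exists>\<^sub>\<infinity>i. (foldl \<delta> (foldl \<delta> s0 w) (replicate i s), s,
                     foldl \<delta> (foldl \<delta> s0 w) (replicate (Suc i) s)) = t)"
      proof -
        have e1: "\<And>i. drun \<delta> s0 (ext w s) (i + length w) = foldl \<delta> (foldl \<delta> s0 w) (replicate i s)"
          using drun_ext[of \<delta> s0 w s] by (simp add: add.commute)
        have e2: "\<And>i. drun \<delta> s0 (ext w s) (Suc (i + length w)) = foldl \<delta> (foldl \<delta> s0 w) (replicate (Suc i) s)"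
          using e1[of "Suc _"] by simp
        have e3: "\<And>i. ext w s (i + length w) = s" by (simp add: ext_def)
        show ?thesis by (simp only: e1 e2 e3)
      qed
      finally show "?thesis w" .
    qed
    show "?thesis t" using A[of u] A[of v] assms by simp
  qed
  then show ?thesis by (simp add: inf_trans_def)
qed

lemma key:
  assumes "c \<ge> 1"
    and L: "dlang (Sigma n c) \<delta> s0 Acc = LP n c \<or>
         dlang (Sigma n c) \<delta> s0 Acc = omega_words (Sigma n c) - LP n c"
    and su: "set u \<subseteq> Sigma n c" and sv: "set v \<subseteq> Sigma n c"
    and eq: "foldl \<delta> s0 u = foldl \<delta> s0 v"
    and xu: "x \<in> reach n u" and xv: "x \<notin> reach n v" and nv: "None \<notin> reach n v"
  shows False
proof -
  have xQ: "x \<in> Qtop n" using xu reach_Qtop by blast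
  have sS: "sig x \<in> Sigma n c"
    using assms(1) xQ by (auto simp: Sigma_def sig_def Qtop_def)
  have wu: "ext u (sig x) \<in> omega_words (Sigma n c)"
    using su sS by (auto simp: omega_words_def ext_def)
  have wv: "ext v (sig x) \<in> omega_words (Sigma n c)"
    using sv sS by (auto simp: omega_words_def ext_def)
  have inU: "ext u (sig x) \<in> LP n c"
  proof -
    obtain r where r: "r 0 \<in> Some ` {..<n}" "\<forall>i<length u. ptrans n (r i) (u!i) (r (Suc i))"
      "r (length u) = x" using reach_complete[OF xu] by blast
    define r' where "r' = (\<lambda>i. if i \<le> length u then r i else None)"
    have "is_prun n (ext u (sig x)) r'"
      unfolding is_prun_def
    proof (intro conjI allI)
      show "r' 0 \<in> Some ` {..<n}" using r by (simp add: r'_def)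
    next
      fix i
      consider "i < length u" | "i = length u" | "i > length u" by linarith
      then show "ptrans n (r' i) (ext u (sig x) i) (r' (Suc i))"
      proof cases
        case 1 then show ?thesis using r by (simp add: r'_def ext_def)
      next
        case 2 then show ?thesis using r xQ
          by (cases x) (auto simp: r'_def ext_def ptrans_def sig_def Qtop_def)
      next
        case 3 then show ?thesis by (simp add: r'_def ptrans_def)
      qed
    qed
    moreover have "prun_accepting (ext u (sig x)) r'"
      unfolding prun_accepting_def by (rule disjI1, rule exI[of _ "Suc (length u)"]) (simp add: r'_def)
    ultimately show ?thesis using wu by (auto simp: LP_def)
  qed
  have notV: "ext v (sig x) \<notin> LP n c"
  proof
    assume "ext v (sig x) \<in> LP n c"
    then obtain r where r: "is_prun n (ext v (sig x)) r" by (auto simp: LP_def)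
    have r0: "r 0 \<in> Some ` {..<n}" and rs: "\<And>i. ptrans n (r i) (ext v (sig x) i) (r (Suc i))"
      using r by (auto simp: is_prun_def)
    have "\<And>i. i < length v \<Longrightarrow> ptrans n (r i) (v!i) (r (Suc i))"
    proof -
      fix i assume "i < length v"
      then have "ext v (sig x) i = v!i" by (simp add: ext_def)
      then show "ptrans n (r i) (v!i) (r (Suc i))" using rs[of i] by simp
    qed
    then have "r (length v) \<in> reach n v"
      by (rule reach_sound[of r n v, OF r0])
    moreover have "ptrans n (r (length v)) (sig x) (r (Suc (length v)))"
      using r by (auto simp: is_prun_def ext_def dest: spec[of _ "length v"])
    ultimately show False using xv nv
      by (cases "r (length v)") (auto simp: ptrans_def sig_def split: if_splits)
  qed
  have "inf_trans \<delta> s0 (ext u (sig x)) = inf_trans \<delta> s0 (ext v (sig x))"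
    using inf_trans_ext[OF eq] .
  then have "ext u (sig x) \<in> dlang (Sigma n c) \<delta> s0 Acc \<longleftrightarrow> ext v (sig x) \<in> dlang (Sigma n c) \<delta> s0 Acc"
    using wu wv by (simp add: dlang_def)
  then show False using L inU notV wu wv by auto
qed

theorem mainTheorem6:
  fixes n c :: nat
    and \<delta> :: "'s::finite \<Rightarrow> letter \<Rightarrow> 's" and s0 :: 's
    and Acc :: "('s \<times> letter \<times> 's) set \<Rightarrow> bool"
    and u v :: "letter list"
  assumes "n \<ge> 1" and "c \<ge> 1"
    and "dlang (Sigma n c) \<delta> s0 Acc = LP n c \<or>
         dlang (Sigma n c) \<delta> s0 Acc = omega_words (Sigma n c) - LP n c"
    and "set u \<subseteq> Sigma n c" and "set v \<subseteq> Sigma n c"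
    and "foldl \<delta> s0 u = foldl \<delta> s0 v"
  shows "reach n u = reach n v \<or> (None \<in> reach n u \<and> None \<in> reach n v)"
proof (rule ccontr)
  assume H: "\<not> ?thesis"
  have "(\<exists>x. x \<in> reach n u \<and> x \<notin> reach n v \<and> None \<notin> reach n v) \<or>
        (\<exists>x. x \<in> reach n v \<and> x \<notin> reach n u \<and> None \<notin> reach n u)"
    using H by blast
  then show False
  proof
    assume "\<exists>x. x \<in> reach n u \<and> x \<notin> reach n v \<and> None \<notin> reach n v"
    then show False using key[OF assms(2,3,4,5,6)] by blast
  next
    assume "\<exists>x. x \<in> reach n v \<and> x \<notin> reach n u \<and> None \<notin> reach n u"
    then show False using key[OF assms(2,3,5,4) assms(6)[symmetric]] by blast
  qed
qed

end
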